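(* Let $S$ be a Stone relation algebra and $x,y,z\in S$. Then: 1. $x$ is an ideal if and only if $\top x\top=x$. 2. If $x$ and $z$ are vectors, then $x^{\smile}yz$ is an ideal. 3. The set $\mathrm{I}(S)$ of ideals is closed under $\cdot$, $\sqcup$, $\sqcap$, converse and pseudocomplement. 4. $\bot$ and $\top$ are ideals. 5. If $x$ and $y$ are ideals, then $xy=x\sqcap y$. 6. $\mathrm{I}(S)$, with $\sqcup,\sqcap$, pseudocomplement, converse, $\bot,\top$ restricted from $S$, with $\sqcap$ as composition and $\top$ as identity, is a Stone relation algebra. 7. If $x$ is an ideal, then $x=x^{\smile}$. 8. If $x$ is an ideal, then $yz\sqcap x=(y\sqcap x)(z\sqcap x)$.
   Context: A Stone relation algebra is a structure $(S,\sqcup,\sqcap,\cdot,\overline{\,\cdot\,},{}^{\smile},\bot,\top,1)$ (write $xy$ for $x\cdot y$, $\overline{x}$ for the pseudocomplement, $x^{\smile}$ for the converse) such that: $(S,\sqcup,\sqcap,\bot,\top)$ is a bounded distributive lattice with order $x\sqsubseteq y\iff x\sqcup y=y$; $x\sqcap y=\bot\iff x\sqsubseteq\overline{y}$; $\overline{x}\sqcup\overline{\overline{x}}=\top$; $\cdot$ is associative with two-sided unit $1$, distributes over $\sqcup$ on both sides, and $\bot$ is a zero of $\cdot$; $x^{\smile\smile}=x$, $(xy)^{\smile}=y^{\smile}x^{\smile}$, $(x\sqcup y)^{\smile}=x^{\smile}\sqcup y^{\smile}$; $\overline{\overline{1}}=1$; $\overline{\overline{xy}}=\overline{\overline{x}}\,\overline{\overline{y}}$;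 $xy\sqcap z\sqsubseteq x(y\sqcap x^{\smile}z)$. $x$ is a vector if $x\top=x$, a covector if $\top x=x$, and an ideal if it is both a vector and a covector. *)

theory Defs
  imports Main
begin

text \<open>The order is  x \<sqsubseteq> y  iff  join x y = y.\<close>

definition stone_ra ::
  "'a set \<Rightarrow> ('a \<Rightarrow> 'a \<Rightarrow> 'a) \<Rightarrow> ('a \<Rightarrow> 'a \<Rightarrow> 'a) \<Rightarrow> ('a \<Rightarrow> 'a \<Rightarrow> 'a)
    \<Rightarrow> ('a \<Rightarrow> 'a) \<Rightarrow> ('a \<Rightarrow> 'a) \<Rightarrow> 'a \<Rightarrow> 'a \<Rightarrow> 'a \<Rightarrow> bool" where
  "stone_ra S join meet mult pc cv bt tp one \<longleftrightarrow>
     \<comment> \<open>closure of the carrier\<close>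
     bt \<in> S \<and> tp \<in> S \<and> one \<in> S \<and>
     (\<forall>x\<in>S. \<forall>y\<in>S. join x y \<in> S \<and> meet x y \<in> S \<and> mult x y \<in> S) \<and>
     (\<forall>x\<in>S. pc x \<in> S \<and> cv x \<in> S) \<and>
     \<comment> \<open>bounded distributive lattice\<close>
     (\<forall>x\<in>S. \<forall>y\<in>S. \<forall>z\<in>S.
        join (join x y) z = join x (join y z) \<and> meet (meet x y) z = meet x (meet y z) \<and>
        meet x (join y z) = join (meet x y) (meet x z)) \<and>
     (\<forall>x\<in>S. \<forall>y\<in>S. join x y = join y x \<and> meet x y = meet y x \<and>
        join x (meet x y) = x \<and> meet x (join x y) = x) \<and>
     (\<forall>x\<in>S. join x bt = x \<and> meet x tp = x) \<and>
     \<comment> \<open>pseudocomplement and Stone axiom\<close>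
     (\<forall>x\<in>S. \<forall>y\<in>S. meet x y = bt \<longleftrightarrow> join x (pc y) = pc y) \<and>
     (\<forall>x\<in>S. join (pc x) (pc (pc x)) = tp) \<and>
     \<comment> \<open>composition\<close>
     (\<forall>x\<in>S. \<forall>y\<in>S. \<forall>z\<in>S. mult (mult x y) z = mult x (mult y z) \<and>
        mult x (join y z) = join (mult x y) (mult x z) \<and>
        mult (join x y) z = join (mult x z) (mult y z)) \<and>
     (\<forall>x\<in>S. mult one x = x \<and> mult x one = x \<and> mult bt x = bt \<and> mult x bt = bt) \<and>
     \<comment> \<open>converse\<close>
     (\<forall>x\<in>S. cv (cv x) = x) \<and>
     (\<forall>x\<in>S. \<forall>y\<in>S. cv (mult x y) = mult (cv y) (cv x) \<and> cv (join x y) = join (cv x) (cv y)) \<and>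
     \<comment> \<open>remaining axioms\<close>
     pc (pc one) = one \<and>
     (\<forall>x\<in>S. \<forall>y\<in>S. pc (pc (mult x y)) = mult (pc (pc x)) (pc (pc y))) \<and>
     (\<forall>x\<in>S. \<forall>y\<in>S. \<forall>z\<in>S.
        join (meet (mult x y) z) (mult x (meet y (mult (cv x) z)))
          = mult x (meet y (mult (cv x) z)))"

definition is_vector :: "('a \<Rightarrow> 'a \<Rightarrow> 'a) \<Rightarrow> 'a \<Rightarrow> 'a \<Rightarrow> bool" where
  "is_vector mult tp x \<longleftrightarrow> mult x tp = x"

definition is_covector :: "('a \<Rightarrow> 'a \<Rightarrow> 'a) \<Rightarrow> 'a \<Rightarrow> 'a \<Rightarrow> bool" where
  "is_covector mult tp x \<longleftrightarrow> mult tp x = x"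

definition is_ideal :: "('a \<Rightarrow> 'a \<Rightarrow> 'a) \<Rightarrow> 'a \<Rightarrow> 'a \<Rightarrow> bool" where
  "is_ideal mult tp x \<longleftrightarrow> is_vector mult tp x \<and> is_covector mult tp x"

definition ideals :: "'a set \<Rightarrow> ('a \<Rightarrow> 'a \<Rightarrow> 'a) \<Rightarrow> 'a \<Rightarrow> 'a set" where
  "ideals S mult tp = {x \<in> S. is_ideal mult tp x}"

end

theory Submission
  imports Defs
begin

locale SRA =
  fixes S join meet mult pc cv bt tp one
  assumes ax: "stone_ra S join meet mult pc cv bt tp one"
begin

abbreviation le where "le x y \<equiv> join x y = y"

lemma axc: "bt \<in> S" "tp \<in> S" "one \<in> S"
  "(\<forall>x\<in>S. \<forall>y\<in>S. join x y \<in> S \<and> meet x y \<in> S \<and> mult x y \<in> S)"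
  "(\<forall>x\<in>S. pc x \<in> S \<and> cv x \<in> S)"
  "(\<forall>x\<in>S. \<forall>y\<in>S. \<forall>z\<in>S.
        join (join x y) z = join x (join y z) \<and> meet (meet x y) z = meet x (meet y z) \<and>
        meet x (join y z) = join (meet x y) (meet x z))"
  "(\<forall>x\<in>S. \<forall>y\<in>S. join x y = join y x \<and> meet x y = meet y x \<and>
        join x (meet x y) = x \<and> meet x (join x y) = x)"
  "(\<forall>x\<in>S. join x bt = x \<and> meet x tp = x)"
  "(\<forall>x\<in>S. \<forall>y\<in>S. meet x y = bt \<longleftrightarrow> join x (pc y) = pc y)"
  "(\<forall>x\<in>S. join (pc x) (pc (pc x)) = tp)"
  "(\<forall>x\<in>S. \<forall>y\<in>S. \<forall>z\<in>S. mult (mult x y) z = mult x (mult y z) \<and>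
        mult x (join y z) = join (mult x y) (mult x z) \<and>
        mult (join x y) z = join (mult x z) (mult y z))"
  "(\<forall>x\<in>S. mult one x = x \<and> mult x one = x \<and> mult bt x = bt \<and> mult x bt = bt)"
  "(\<forall>x\<in>S. cv (cv x) = x)"
  "(\<forall>x\<in>S. \<forall>y\<in>S. cv (mult x y) = mult (cv y) (cv x) \<and> cv (join x y) = join (cv x) (cv y))"
  "pc (pc one) = one"
  "(\<forall>x\<in>S. \<forall>y\<in>S. pc (pc (mult x y)) = mult (pc (pc x)) (pc (pc y)))"
  "(\<forall>x\<in>S. \<forall>y\<in>S. \<forall>z\<in>S.
        join (meet (mult x y) z) (mult x (meet y (mult (cv x) z)))
          = mult x (meet y (mult (cv x) z)))"
  by (insert ax[unfolded stone_ra_def], elim conjE, assumption)+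

lemma cl[simp]: "bt \<in> S" "tp \<in> S" "one \<in> S"
  "x \<in> S \<Longrightarrow> y \<in> S \<Longrightarrow> join x y \<in> S"
  "x \<in> S \<Longrightarrow> y \<in> S \<Longrightarrow> meet x y \<in> S"
  "x \<in> S \<Longrightarrow> y \<in> S \<Longrightarrow> mult x y \<in> S"
  "x \<in> S \<Longrightarrow> pc x \<in> S" "x \<in> S \<Longrightarrow> cv x \<in> S"
  using axc(1-5) by blast+

lemma jassoc: assumes "x \<in> S" and "y \<in> S" and "z \<in> S" shows "join (join x y) z = join x (join y z)" using axc(6) assms by blast
lemma massoc: assumes "x \<in> S" and "y \<in> S" and "z \<in> S" shows "meet (meet x y) z = meet x (meet y z)" using axc(6) assms by blast
lemma distr: assumes "x \<in> S" and "y \<in> S" and "z \<in> S" shows "meet x (join y z) = join (meet x y) (meet x z)" using axc(6) assms by blast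
lemma jcomm: assumes "x \<in> S" and "y \<in> S" shows "join x y = join y x" using axc(7) assms by blast
lemma mcomm: assumes "x \<in> S" and "y \<in> S" shows "meet x y = meet y x" using axc(7) assms by blast
lemma abs1: assumes "x \<in> S" and "y \<in> S" shows "join x (meet x y) = x" using axc(7) assms by blast
lemma abs2: assumes "x \<in> S" and "y \<in> S" shows "meet x (join x y) = x" using axc(7) assms by blast
lemma jbot: assumes "x \<in> S" shows "join x bt = x" using axc(8) assms by blast
lemma mtop: assumes "x \<in> S" shows "meet x tp = x" using axc(8) assms by blast
lemma pc_iff: assumes "x \<in> S" and "y \<in> S" shows "meet x y = bt \<longleftrightarrow> join x (pc y) = pc y" using axc(9) assms by blast
lemma stone: assumes "x \<in> S" shows "join (pc x) (pc (pc x)) = tp" using axc(10) assms by blast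
lemma muassoc: assumes "x \<in> S" and "y \<in> S" and "z \<in> S" shows "mult (mult x y) z = mult x (mult y z)" using axc(11) assms by blast
lemma mdl: assumes "x \<in> S" and "y \<in> S" and "z \<in> S" shows "mult x (join y z) = join (mult x y) (mult x z)" using axc(11) assms by blast
lemma mdr: assumes "x \<in> S" and "y \<in> S" and "z \<in> S" shows "mult (join x y) z = join (mult x z) (mult y z)" using axc(11) assms by blast
lemma mone: assumes "x \<in> S" shows "mult one x = x" "mult x one = x" using axc(12) assms by blast+
lemma mbt: assumes "x \<in> S" shows "mult bt x = bt" "mult x bt = bt" using axc(12) assms by blast+
lemma cvcv: assumes "x \<in> S" shows "cv (cv x) = x" using axc(13) assms by blast
lemma cvmult: assumes "x \<in> S" and "y \<in> S" shows "cv (mult x y) = mult (cv y) (cv x)" using axc(14) assms by blast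
lemma cvjoin: assumes "x \<in> S" and "y \<in> S" shows "cv (join x y) = join (cv x) (cv y)" using axc(14) assms by blast
lemma pcpc: assumes "x \<in> S" and "y \<in> S" shows "pc (pc (mult x y)) = mult (pc (pc x)) (pc (pc y))" using axc(16) assms by blast
lemma ded: assumes "x \<in> S" and "y \<in> S" and "z \<in> S" shows "le (meet (mult x y) z) (mult x (meet y (mult (cv x) z)))" using axc(17) assms by blast

lemma pcone: "pc (pc one) = one" using axc(15) .

lemma jidem: "x \<in> S \<Longrightarrow> join x x = x" by (metis abs1 abs2 cl(4))
lemma midem: "x \<in> S \<Longrightarrow> meet x x = x" by (metis abs1 abs2 cl(5))
lemma le_meet: "x \<in> S \<Longrightarrow> y \<in> S \<Longrightarrow> le x y \<longleftrightarrow> meet x y = x"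
  by (metis abs1 abs2 jcomm mcomm)
lemma le_trans: "x \<in> S \<Longrightarrow> y \<in> S \<Longrightarrow> z \<in> S \<Longrightarrow> le x y \<Longrightarrow> le y z \<Longrightarrow> le x z"
  by (metis jassoc)
lemma le_antisym: "x \<in> S \<Longrightarrow> y \<in> S \<Longrightarrow> le x y \<Longrightarrow> le y x \<Longrightarrow> x = y"
  by (metis jcomm)
lemma meet_lb1: "x \<in> S \<Longrightarrow> y \<in> S \<Longrightarrow> le (meet x y) x"
  by (metis abs1 jcomm cl(5))
lemma meet_lb2: "x \<in> S \<Longrightarrow> y \<in> S \<Longrightarrow> le (meet x y) y"
  by (metis meet_lb1 mcomm)
lemma meet_glb: "x \<in> S \<Longrightarrow> y \<in> S \<Longrightarrow> z \<in> S \<Longrightarrow> le z x \<Longrightarrow> le z y \<Longrightarrow> le z (meet x y)"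
  by (metis le_meet massoc cl(5))
lemma join_ub1: "x \<in> S \<Longrightarrow> y \<in> S \<Longrightarrow> le x (join x y)"
  by (metis jassoc jidem)
lemma join_ub2: "x \<in> S \<Longrightarrow> y \<in> S \<Longrightarrow> le y (join x y)"
  by (metis join_ub1 jcomm)
lemma bot_le: "x \<in> S \<Longrightarrow> le bt x" by (metis jbot jcomm cl(1))
lemma le_top: "x \<in> S \<Longrightarrow> le x tp" by (metis le_meet mtop cl(2))
lemma meet_bot: "x \<in> S \<Longrightarrow> meet x bt = bt" by (metis bot_le le_meet mcomm cl(1))
lemma meet_mono: "x \<in> S \<Longrightarrow> y \<in> S \<Longrightarrow> z \<in> S \<Longrightarrow> le x y \<Longrightarrow> le (meet x z) (meet y z)"
  by (meson cl(5) le_trans meet_glb meet_lb1 meet_lb2)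
lemma mult_mono_r: "x \<in> S \<Longrightarrow> y \<in> S \<Longrightarrow> z \<in> S \<Longrightarrow> le x y \<Longrightarrow> le (mult z x) (mult z y)"
  by (metis mdl)
lemma mult_mono_l: "x \<in> S \<Longrightarrow> y \<in> S \<Longrightarrow> z \<in> S \<Longrightarrow> le x y \<Longrightarrow> le (mult x z) (mult y z)"
  by (metis mdr)
lemma mult_mono: "x \<in> S \<Longrightarrow> y \<in> S \<Longrightarrow> u \<in> S \<Longrightarrow> v \<in> S \<Longrightarrow> le x y \<Longrightarrow> le u v \<Longrightarrow> le (mult x u) (mult y v)"
  by (meson cl(6) le_trans mult_mono_l mult_mono_r)
lemma cv_mono: "x \<in> S \<Longrightarrow> y \<in> S \<Longrightarrow> le x y \<Longrightarrow> le (cv x) (cv y)"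
  by (metis cvjoin)
lemma cv_meet: "x \<in> S \<Longrightarrow> y \<in> S \<Longrightarrow> cv (meet x y) = meet (cv x) (cv y)"
proof -
  assume S: "x \<in> S" "y \<in> S"
  have a: "le (cv (meet a b)) (meet (cv a) (cv b))" if "a \<in> S" "b \<in> S" for a b
    using that by (meson cl cv_mono meet_glb meet_lb1 meet_lb2)
  have "le (cv (meet (cv x) (cv y))) (meet x y)" using a[of "cv x" "cv y"] S by (simp add: cvcv)
  then have "le (meet (cv x) (cv y)) (cv (meet x y))" using S
    by (metis cl cv_mono cvcv)
  then show ?thesis using a[OF S] S by (metis cl le_antisym)
qed
lemma cv_bt: "cv bt = bt" by (metis bot_le cl cv_mono cvcv le_antisym)
lemma cv_tp: "cv tp = tp" by (metis le_top cl cv_mono cvcv le_antisym)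
lemma cv_one: "cv one = one" by (metis cl(3) cl(8) cvcv cvmult mone(2))
lemma tp_tp: "mult tp tp = tp"
  by (metis cl le_antisym le_top mone(1) mult_mono_l)
lemma one_tp: "x \<in> S \<Longrightarrow> le x (mult x tp)" by (metis cl(2) cl(3) le_top mone(2) mult_mono_r)
lemma one_tp2: "x \<in> S \<Longrightarrow> le x (mult tp x)" by (metis cl(2) cl(3) le_top mone(1) mult_mono_l)
lemma ded2: "x \<in> S \<Longrightarrow> y \<in> S \<Longrightarrow> z \<in> S \<Longrightarrow> le (meet (mult x y) z) (mult (meet x (mult z (cv y))) y)"
proof -
  assume S: "x \<in> S" "y \<in> S" "z \<in> S"
  have "le (meet (mult (cv y) (cv x)) (cv z)) (mult (cv y) (meet (cv x) (mult (cv (cv y)) (cv z))))"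
    using S by (simp add: ded)
  then have "le (cv (meet (mult (cv y) (cv x)) (cv z))) (cv (mult (cv y) (meet (cv x) (mult (cv (cv y)) (cv z)))))"
    using S by (simp add: cv_mono)
  then show ?thesis using S by (simp add: cv_meet cvmult cvcv)
qed
lemma pc_self: "x \<in> S \<Longrightarrow> meet x (pc x) = bt" by (metis cl(7) jidem mcomm pc_iff)
lemma pc_le: "x \<in> S \<Longrightarrow> y \<in> S \<Longrightarrow> meet x y = bt \<Longrightarrow> le x (pc y)" by (metis pc_iff)
lemma cv_pc: "x \<in> S \<Longrightarrow> cv (pc x) = pc (cv x)"
proof -
  assume S: "x \<in> S"
  have a: "le (cv (pc a)) (pc (cv a))" if "a \<in> S" for a
    using that by (metis cl cv_bt cv_meet pc_le pc_self mcomm)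
  have "le (cv (pc (cv x))) (pc x)" using a[of "cv x"] S by (simp add: cvcv)
  then have "le (pc (cv x)) (cv (pc x))" using S by (metis cl cv_mono cvcv)
  then show ?thesis using a[OF S] S by (metis cl le_antisym)
qed


lemma vec_pc: "x \<in> S \<Longrightarrow> mult x tp = x \<Longrightarrow> mult (pc x) tp = pc x"
proof -
  assume S: "x \<in> S" and v: "mult x tp = x"
  have c: "mult tp (cv x) = cv x" using S v by (metis cl cvmult cv_tp)
  have h1: "le (meet (mult (cv (pc x)) x) tp) (mult (meet (cv (pc x)) (mult tp (cv x))) x)"
    using S by (simp add: ded2)
  have h2: "mult (meet (cv (pc x)) (mult tp (cv x))) x = bt"
    using S by (simp add: c cv_meet[symmetric] mcomm[of "pc x" x] pc_self cv_bt mbt)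
  have h: "le (meet (mult (cv (pc x)) x) tp) bt" using h1 h2 by simp
  have M: "mult (cv (pc x)) x \<in> S" using S by simp
  have "le (mult (cv (pc x)) x) bt" using h mtop[OF M] by simp
  then have "mult (cv (pc x)) x = bt" using le_antisym[OF M cl(1)] bot_le[OF M] by blast
  then have "le (meet (mult (pc x) tp) x) bt"
    using ded[of "pc x" tp x] S by (simp add: meet_bot mcomm[of tp] mbt)
  then have "meet (mult (pc x) tp) x = bt" using S le_antisym[OF _ cl(1)] bot_le by simp
  then have "le (mult (pc x) tp) (pc x)" using S by (simp add: pc_le)
  then show ?thesis using S by (metis cl le_antisym one_tp)
qed

lemma cov_cv: "x \<in> S \<Longrightarrow> mult tp x = x \<Longrightarrow> mult (cv x) tp = cv x"
  by (metis cl cvmult cv_tp)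
lemma vec_cv: "x \<in> S \<Longrightarrow> mult x tp = x \<Longrightarrow> mult tp (cv x) = cv x"
  by (metis cl cvmult cv_tp)

lemma cov_pc: "x \<in> S \<Longrightarrow> mult tp x = x \<Longrightarrow> mult tp (pc x) = pc x"
proof -
  assume S: "x \<in> S" and v: "mult tp x = x"
  have "mult (pc (cv x)) tp = pc (cv x)" using S v cov_cv vec_pc by simp
  then have "mult (cv (pc x)) tp = cv (pc x)" using S by (simp add: cv_pc)
  then have "cv (mult (cv (pc x)) tp) = pc x" using S by (simp add: cvcv)
  then show ?thesis using S by (simp add: cvmult cvcv cv_tp)
qed

lemma ideal_mm: "x \<in> S \<Longrightarrow> y \<in> S \<Longrightarrow> mult x tp = x \<Longrightarrow> mult tp y = y \<Longrightarrow> mult x y = meet x y"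
proof -
  assume S: "x \<in> S" "y \<in> S" and v: "mult x tp = x" "mult tp y = y"
  have 1: "le (mult x y) (meet x y)" using S v
    by (metis cl le_top meet_glb mult_mono_l mult_mono_r)
  have a: "le (meet (mult x one) y) (mult x (meet one (mult (cv x) y)))" using S by (simp add: ded)
  have b: "le (mult x (meet one (mult (cv x) y))) (mult x (mult (cv x) y))"
    using S by (simp add: meet_lb2 mult_mono_r)
  have c: "le (mult x (mult (cv x) y)) (mult x (mult tp y))"
    using S by (simp add: le_top mult_mono_l mult_mono_r)
  have "le (meet x y) (mult x y)" using le_trans[OF _ _ _ a le_trans[OF _ _ _ b c]] S v by (simp add: mone)
  then show ?thesis using 1 S by (simp add: le_antisym)
qed

lemma ideal_cv_le: "x \<in> S \<Longrightarrow> mult x tp = x \<Longrightarrow> mult tp x = x \<Longrightarrow> le x (cv x)"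
proof -
  assume S: "x \<in> S" and v: "mult x tp = x" "mult tp x = x"
  have a: "le (meet (mult x one) x) (mult x (meet one (mult (cv x) x)))" using S by (simp add: ded)
  have b: "le (mult x (meet one (mult (cv x) x))) (mult x (mult (cv x) x))"
    using S by (simp add: meet_lb2 mult_mono_r)
  have c: "le (mult x (mult (cv x) x)) (mult tp (mult (cv x) tp))"
    using S mult_mono[of x tp "mult (cv x) x" "mult (cv x) tp"] by (simp add: le_top mult_mono_r)
  have d: "mult tp (mult (cv x) tp) = cv x" using S v by (simp add: cov_cv vec_cv)
  show ?thesis using le_trans[OF _ _ _ a le_trans[OF _ _ _ b c]] S v d by (simp add: mone midem)
qed

lemma ideal_cv: "x \<in> S \<Longrightarrow> mult x tp = x \<Longrightarrow> mult tp x = x \<Longrightarrow> x = cv x"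
proof -
  assume S: "x \<in> S" and v: "mult x tp = x" "mult tp x = x"
  have "le (cv x) (cv (cv x))" using ideal_cv_le[of "cv x"] S v by (simp add: cov_cv vec_cv)
  then show ?thesis using ideal_cv_le[OF S v] S by (simp add: cvcv le_antisym)
qed

lemma item8: "x \<in> S \<Longrightarrow> y \<in> S \<Longrightarrow> z \<in> S \<Longrightarrow> mult x tp = x \<Longrightarrow> mult tp x = x \<Longrightarrow>
   meet (mult y z) x = mult (meet y x) (meet z x)"
proof -
  assume S: "x \<in> S" "y \<in> S" "z \<in> S" and v: "mult x tp = x" "mult tp x = x"
  have a1: "le (meet (mult y z) x) (mult (meet y (mult x (cv z))) z)" using S by (simp add: ded2)
  have a2: "le (mult x (cv z)) x" using S v by (metis cl le_top mult_mono_r)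
  have a3: "le (mult (meet y (mult x (cv z))) z) (mult (meet y x) z)"
    using S a2 by (simp add: meet_mono mcomm[of y] mult_mono_l)
  have A: "le (meet (mult y z) x) (mult (meet y x) z)" using le_trans[OF _ _ _ a1 a3] S by simp
  have b1: "le (meet (mult (meet y x) z) x) (mult (meet y x) (meet z (mult (cv (meet y x)) x)))"
    using S by (simp add: ded)
  have b2: "le (mult (cv (meet y x)) x) x" using S v by (metis cl le_top mult_mono_l)
  have b3: "le (mult (meet y x) (meet z (mult (cv (meet y x)) x))) (mult (meet y x) (meet z x))"
    using S b2 by (simp add: meet_mono mcomm[of z] mult_mono_r)
  have B: "le (meet (mult (meet y x) z) x) (mult (meet y x) (meet z x))" using le_trans[OF _ _ _ b1 b3] S by simp
  have "le (meet (meet (mult y z) x) x) (meet (mult (meet y x) z) x)" using A S by (simp add: meet_mono)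
  then have 1: "le (meet (mult y z) x) (mult (meet y x) (meet z x))"
    using le_trans[OF _ _ _ _ B] S by (simp add: massoc midem)
  have c1: "le (mult (meet y x) (meet z x)) (mult y z)" using S by (simp add: meet_lb1 mult_mono)
  have c2: "le (mult (meet y x) (meet z x)) (mult x tp)" using S by (simp add: meet_lb2 le_top mult_mono)
  have 2: "le (mult (meet y x) (meet z x)) (meet (mult y z) x)" using c1 c2 S v by (simp add: meet_glb)
  show ?thesis using 1 2 S by (simp add: le_antisym)
qed

end

theorem mainTheorem10:
  assumes "stone_ra S join meet mult pc cv bt tp one"
    and "x \<in> S" and "y \<in> S" and "z \<in> S"
  shows "(is_ideal mult tp x \<longleftrightarrow> mult (mult tp x) tp = x)
    \<and> (is_vector mult tp x \<and> is_vector mult tp z \<longrightarrow> is_ideal mult tp (mult (mult (cv x) y) z))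
    \<and> (\<forall>a\<in>ideals S mult tp. \<forall>b\<in>ideals S mult tp.
         mult a b \<in> ideals S mult tp \<and> join a b \<in> ideals S mult tp \<and> meet a b \<in> ideals S mult tp)
    \<and> (\<forall>a\<in>ideals S mult tp. cv a \<in> ideals S mult tp \<and> pc a \<in> ideals S mult tp)
    \<and> is_ideal mult tp bt \<and> is_ideal mult tp tp
    \<and> (is_ideal mult tp x \<and> is_ideal mult tp y \<longrightarrow> mult x y = meet x y)
    \<and> stone_ra (ideals S mult tp) join meet meet pc cv bt tp tp
    \<and> (is_ideal mult tp x \<longrightarrow> x = cv x)
    \<and> (is_ideal mult tp x \<longrightarrow> meet (mult y z) x = mult (meet y x) (meet z x))"
proof -
  interpret SRA S join meet mult pc cv bt tp one using assms(1) by unfold_locales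
  note S = assms(2-4)
  let ?I = "ideals S mult tp"
  have idl: "is_ideal mult tp a \<longleftrightarrow> mult a tp = a \<and> mult tp a = a" for a
    unfolding is_ideal_def is_vector_def is_covector_def by blast
  have memI: "a \<in> ?I \<longleftrightarrow> a \<in> S \<and> mult a tp = a \<and> mult tp a = a" for a
    unfolding ideals_def idl by blast
  have i1: "is_ideal mult tp x \<longleftrightarrow> mult (mult tp x) tp = x"
    unfolding idl using S by (metis cl muassoc tp_tp)
  have i2: "is_vector mult tp x \<and> is_vector mult tp z \<longrightarrow> is_ideal mult tp (mult (mult (cv x) y) z)"
    unfolding idl is_vector_def using S by (metis cl muassoc vec_cv)
  have Imult: "mult a b \<in> ?I" if "a \<in> ?I" "b \<in> ?I" for a b
    using that unfolding memI by (metis cl muassoc)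
  have Ijoin: "join a b \<in> ?I" if "a \<in> ?I" "b \<in> ?I" for a b
    using that unfolding memI by (metis cl mdl mdr)
  have Imeet: "meet a b \<in> ?I" if "a \<in> ?I" "b \<in> ?I" for a b
    using that Imult[OF that] unfolding memI by (metis ideal_mm)
  have Icv: "cv a \<in> ?I" if "a \<in> ?I" for a
    using that unfolding memI by (metis cl cov_cv vec_cv)
  have Ipc: "pc a \<in> ?I" if "a \<in> ?I" for a
    using that unfolding memI by (metis cl cov_pc vec_pc)
  have Ibt: "bt \<in> ?I" unfolding memI by (metis cl(1) cl(2) mbt)
  have Itp: "tp \<in> ?I" unfolding memI by (metis cl(2) tp_tp)
  have IS: "a \<in> S" if "a \<in> ?I" for a using that memI by blast
  have icv: "cv a = a" if "a \<in> ?I" for a using that memI ideal_cv by metis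
  have imm: "mult a b = meet a b" if "a \<in> ?I" "b \<in> ?I" for a b using that memI ideal_mm by metis
  have pctp: "pc tp = bt" by (metis cl(2) cl(7) pc_self mcomm mtop)
  have pcbt: "pc bt = tp"
    by (metis cl(1) cl(2) cl(7) le_antisym le_top meet_bot pc_le mcomm)
  have i6: "stone_ra ?I join meet meet pc cv bt tp tp"
    unfolding stone_ra_def
    using pcbt pctp
    apply (intro conjI ballI)
    apply (simp_all add: Ibt Itp Ijoin Imeet Ipc Icv IS jassoc massoc distr abs1 abs2 jbot mtop pc_iff stone cvcv cvjoin)
    apply (metis IS jcomm)
    apply (metis IS mcomm)
    apply (metis IS abs1 distr midem)
    apply (metis IS distr mcomm cl(4))
    apply (metis IS mtop mcomm cl(2))
    apply (metis IS bot_le cl(7))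
    apply (metis IS meet_bot pc_le cl(1))
    apply (metis IS cv_meet mcomm cl(8))
    apply (metis IS imm pcpc Ipc)
    subgoal for a b c
    proof -
      assume h: "a \<in> ?I" "b \<in> ?I" "c \<in> ?I"
      have S3: "a \<in> S" "b \<in> S" "c \<in> S" using h IS by auto
      have "meet b (meet a c) = meet a (meet b c)" using S3 by (metis massoc mcomm)
      then have "meet a (meet b (meet (cv a) c)) = meet a (meet b c)"
        using S3 icv[OF h(1)] by (metis massoc midem cl(5))
      then show ?thesis using S3 by (simp add: jidem)
    qed
    done
  have b1: "is_ideal mult tp bt" "is_ideal mult tp tp" using Ibt Itp memI idl by blast+
  have c3: "\<forall>a\<in>?I. \<forall>b\<in>?I. mult a b \<in> ?I \<and> join a b \<in> ?I \<and> meet a b \<in> ?I"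
    using Imult Ijoin Imeet by blast
  have c4: "\<forall>a\<in>?I. cv a \<in> ?I \<and> pc a \<in> ?I" using Icv Ipc by blast
  have c5: "is_ideal mult tp x \<and> is_ideal mult tp y \<longrightarrow> mult x y = meet x y"
    unfolding idl using ideal_mm[OF S(1) S(2)] by blast
  have c7: "is_ideal mult tp x \<longrightarrow> x = cv x"
    unfolding idl using ideal_cv[OF S(1)] by blast
  have c8: "is_ideal mult tp x \<longrightarrow> meet (mult y z) x = mult (meet y x) (meet z x)"
    unfolding idl using item8[OF S] by blast
  show ?thesis
    using i1 i2 c3 c4 b1 c5 i6 c7 c8 by (intro conjI)
qed
end
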